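(* Let $G=(V,E)$ be connected with $n\ge 3$ vertices. For every $u\in V_{\ge2}$, $$(n-1)(n-2)\,\mathrm{bc}(u)=\sum_{s\in V_{\ge2}\setminus\{u\}}\big(1+\mathrm{deg}_1(s)\big)\big(\tilde\delta_s(u)+\zeta_s(u)\big)+\mathrm{deg}_1(u)\big(2n-3-\mathrm{deg}_1(u)\big).$$
   Context: Graphs are finite, simple, undirected, unweighted. $\sigma_{st}$ = number of shortest $s$–$t$ paths, $\sigma_{st}(v)$ = number of those through $v\notin\{s,t\}$; $\mathrm{bc}(v)=\frac{1}{(n-1)(n-2)}\sum_{s\ne t,\ s,t\ne v}\sigma_{st}(v)/\sigma_{st}$ in $G$ (ordered pairs). $V_1$ = degree-1 vertices of $G$, $V_{\ge2}=V\setminus V_1$, $\tilde G$ = subgraph induced by $V_{\ge2}$ with counts $\tilde\sigma$. $\mathrm{deg}_1(t)$ = number of neighbors of $t$ in $G$ of degree 1. For $s,u\in V_{\ge2}$: $\tilde\delta_s(u)=\sum_{t\in V_{\ge2},t\ne s,u}\tilde\sigma_{st}(u)/\tilde\sigma_{st}$, $\zeta_s(u)=\sum_{t\in V_{\ge2},t\ne s,u}\mathrm{deg}_1(t)\tilde\sigma_{st}(u)/\tilde\sigma_{st}$. *)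

theory Defs
  imports Complex_Main
begin

definition simple_graph :: "'a set \<Rightarrow> ('a \<Rightarrow> 'a \<Rightarrow> bool) \<Rightarrow> bool" where
  "simple_graph V E \<longleftrightarrow> finite V \<and> (\<forall>x y. E x y \<longrightarrow> x \<in> V \<and> y \<in> V)
     \<and> (\<forall>x y. E x y \<longrightarrow> E y x) \<and> (\<forall>x. \<not> E x x)"

definition walk :: "'a set \<Rightarrow> ('a \<Rightarrow> 'a \<Rightarrow> bool) \<Rightarrow> 'a list \<Rightarrow> bool" where
  "walk W E xs \<longleftrightarrow> xs \<noteq> [] \<and> set xs \<subseteq> W \<and>
     (\<forall>i. Suc i < length xs \<longrightarrow> E (xs ! i) (xs ! Suc i))"

definition walks_between :: "'a set \<Rightarrow> ('a \<Rightarrow> 'a \<Rightarrow> bool) \<Rightarrow> 'a \<Rightarrow> 'a \<Rightarrow> 'a list set" where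
  "walks_between W E s t = {xs. walk W E xs \<and> hd xs = s \<and> last xs = t}"

definition connected_graph :: "'a set \<Rightarrow> ('a \<Rightarrow> 'a \<Rightarrow> bool) \<Rightarrow> bool" where
  "connected_graph V E \<longleftrightarrow> (\<forall>s\<in>V. \<forall>t\<in>V. walks_between V E s t \<noteq> {})"

text \<open>Shortest s-t paths (walks of minimum length; these are automatically paths).\<close>

definition shortest_paths :: "'a set \<Rightarrow> ('a \<Rightarrow> 'a \<Rightarrow> bool) \<Rightarrow> 'a \<Rightarrow> 'a \<Rightarrow> 'a list set" where
  "shortest_paths W E s t = {xs \<in> walks_between W E s t.
      \<forall>ys \<in> walks_between W E s t. length xs \<le> length ys}"

definition sigma :: "'a set \<Rightarrow> ('a \<Rightarrow> 'a \<Rightarrow> bool) \<Rightarrow> 'a \<Rightarrow> 'a \<Rightarrow> nat" where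
  "sigma W E s t = card (shortest_paths W E s t)"

definition sigma_via :: "'a set \<Rightarrow> ('a \<Rightarrow> 'a \<Rightarrow> bool) \<Rightarrow> 'a \<Rightarrow> 'a \<Rightarrow> 'a \<Rightarrow> nat" where
  "sigma_via W E s t v = card {p \<in> shortest_paths W E s t. v \<in> set p}"

definition betweenness :: "'a set \<Rightarrow> ('a \<Rightarrow> 'a \<Rightarrow> bool) \<Rightarrow> 'a \<Rightarrow> real" where
  "betweenness V E v = (1 / (real (card V - 1) * real (card V - 2))) *
     (\<Sum>(s,t) \<in> {(s,t). s \<in> V \<and> t \<in> V \<and> s \<noteq> t \<and> s \<noteq> v \<and> t \<noteq> v}.
        real (sigma_via V E s t v) / real (sigma V E s t))"

definition degree :: "'a set \<Rightarrow> ('a \<Rightarrow> 'a \<Rightarrow> bool) \<Rightarrow> 'a \<Rightarrow> nat" where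
  "degree V E v = card {w \<in> V. E v w}"

definition V1 :: "'a set \<Rightarrow> ('a \<Rightarrow> 'a \<Rightarrow> bool) \<Rightarrow> 'a set" where
  "V1 V E = {v \<in> V. degree V E v = 1}"

definition Vge2 :: "'a set \<Rightarrow> ('a \<Rightarrow> 'a \<Rightarrow> bool) \<Rightarrow> 'a set" where
  "Vge2 V E = V - V1 V E"

definition deg1 :: "'a set \<Rightarrow> ('a \<Rightarrow> 'a \<Rightarrow> bool) \<Rightarrow> 'a \<Rightarrow> nat" where
  "deg1 V E t = card {w \<in> V. E t w \<and> degree V E w = 1}"

definition delta_tilde :: "'a set \<Rightarrow> ('a \<Rightarrow> 'a \<Rightarrow> bool) \<Rightarrow> 'a \<Rightarrow> 'a \<Rightarrow> real" where
  "delta_tilde V E s u = (\<Sum>t \<in> Vge2 V E - {s, u}.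
     real (sigma_via (Vge2 V E) E s t u) / real (sigma (Vge2 V E) E s t))"

definition zeta :: "'a set \<Rightarrow> ('a \<Rightarrow> 'a \<Rightarrow> bool) \<Rightarrow> 'a \<Rightarrow> 'a \<Rightarrow> real" where
  "zeta V E s u = (\<Sum>t \<in> Vge2 V E - {s, u}. real (deg1 V E t) *
     real (sigma_via (Vge2 V E) E s t u) / real (sigma (Vge2 V E) E s t))"

end

theory Submission
  imports Defs
begin


lemma walk_iff: "walk W E xs \<longleftrightarrow> xs \<noteq> [] \<and> set xs \<subseteq> W \<and> successively E xs"
  unfolding walk_def successively_conv_nth by blast

lemma walks_rev:
  assumes "\<And>x y. E x y \<Longrightarrow> E y x"
  shows "walks_between W E s t = rev ` walks_between W E t s"
proof -
  have sw: "successively (\<lambda>x y. E y x) xs = successively E xs" for xs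
    by (rule successively_cong) (use assms in auto)
  have "xs \<in> walks_between W E s t \<Longrightarrow> rev xs \<in> walks_between W E t s" for xs s t
    by (auto simp: walks_between_def walk_iff sw hd_rev last_rev)
  then show ?thesis
    by (auto intro!: image_eqI[where x="rev xs" for xs])
qed

lemma sp_rev:
  assumes "\<And>x y. E x y \<Longrightarrow> E y x"
  shows "shortest_paths W E s t = rev ` shortest_paths W E t s"
proof -
  have "xs \<in> shortest_paths W E s t \<Longrightarrow> rev xs \<in> shortest_paths W E t s" for xs s t
    unfolding shortest_paths_def using walks_rev[OF assms, where W=W and s=t and t=s] by auto
  then show ?thesis by (auto intro!: image_eqI[where x="rev xs" for xs])
qed

lemma sigma_sym:
  assumes "\<And>x y. E x y \<Longrightarrow> E y x"
  shows "sigma W E s t = sigma W E t s"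
proof -
  have e: "shortest_paths W E s t = rev ` shortest_paths W E t s" by (rule sp_rev[OF assms])
  show ?thesis unfolding sigma_def e by (simp add: card_image)
qed

lemma sigma_via_sym:
  assumes "\<And>x y. E x y \<Longrightarrow> E y x"
  shows "sigma_via W E s t v = sigma_via W E t s v"
proof -
  have "{p \<in> shortest_paths W E s t. v \<in> set p} = rev ` {p \<in> shortest_paths W E t s. v \<in> set p}"
  proof -
    have e: "shortest_paths W E s t = rev ` shortest_paths W E t s" by (rule sp_rev[OF assms])
    show ?thesis unfolding e by auto
  qed
  then show ?thesis unfolding sigma_via_def by (simp add: card_image)
qed

lemma walks_cons:
  assumes nb: "\<And>w. E x w \<longleftrightarrow> w = p" and xW: "x \<in> W" and yx: "y \<noteq> x"
  shows "walks_between W E x y = Cons x ` walks_between W E p y"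
proof
  show "walks_between W E x y \<subseteq> Cons x ` walks_between W E p y"
  proof
    fix xs assume "xs \<in> walks_between W E x y"
    then have w: "xs \<noteq> []" "set xs \<subseteq> W" "successively E xs" "hd xs = x" "last xs = y"
      by (auto simp: walks_between_def walk_iff)
    then obtain ys where xs: "xs = x # ys" by (cases xs) auto
    with w yx have "ys \<noteq> []" by auto
    with w xs nb have "hd ys = p" by (auto simp: successively_Cons)
    with w xs \<open>ys \<noteq> []\<close> have "ys \<in> walks_between W E p y"
      by (auto simp: walks_between_def walk_iff successively_Cons)
    then show "xs \<in> Cons x ` walks_between W E p y" using xs by auto
  qed
next
  show "Cons x ` walks_between W E p y \<subseteq> walks_between W E x y"
    using nb xW by (auto simp: walks_between_def walk_iff successively_Cons)
qed

lemma sp_cons: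
  assumes nb: "\<And>w. E x w \<longleftrightarrow> w = p" and xW: "x \<in> W" and yx: "y \<noteq> x"
  shows "shortest_paths W E x y = Cons x ` shortest_paths W E p y"
proof -
  have e: "walks_between W E x y = Cons x ` walks_between W E p y" using assms by (rule walks_cons)
  show ?thesis unfolding shortest_paths_def e by auto
qed

lemma sigma_cons:
  assumes nb: "\<And>w. E x w \<longleftrightarrow> w = p" and xW: "x \<in> W" and yx: "y \<noteq> x"
  shows "sigma W E x y = sigma W E p y"
proof -
  have e: "shortest_paths W E x y = Cons x ` shortest_paths W E p y" using assms by (rule sp_cons)
  show ?thesis unfolding sigma_def e by (simp add: card_image)
qed

lemma sigma_via_cons:
  assumes nb: "\<And>w. E x w \<longleftrightarrow> w = p" and xW: "x \<in> W" and yx: "y \<noteq> x" and "v \<noteq> x"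
  shows "sigma_via W E x y v = sigma_via W E p y v"
proof -
  have "{q \<in> shortest_paths W E x y. v \<in> set q} = Cons x ` {q \<in> shortest_paths W E p y. v \<in> set q}"
  proof -
    have e: "shortest_paths W E x y = Cons x ` shortest_paths W E p y" using nb xW yx by (rule sp_cons)
    show ?thesis unfolding e using assms(4) by auto
  qed
  then show ?thesis unfolding sigma_via_def by (simp add: card_image)
qed




lemma sp_exists:
  assumes "walks_between W E s t \<noteq> {}"
  shows "shortest_paths W E s t \<noteq> {}"
proof -
  let ?A = "walks_between W E s t"
  define k where "k = (LEAST k. \<exists>xs\<in>?A. length xs = k)"
  from assms obtain ys where "ys \<in> ?A" by auto
  then have "\<exists>k. \<exists>xs\<in>?A. length xs = k" by auto
  then have "\<exists>xs\<in>?A. length xs = k" unfolding k_def by (rule LeastI_ex)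
  then obtain xs where xs: "xs \<in> ?A" "length xs = k" by auto
  have "\<forall>ys\<in>?A. length xs \<le> length ys"
    using xs unfolding k_def by (auto intro: Least_le)
  with xs show ?thesis unfolding shortest_paths_def by auto
qed

lemma sp_finite:
  assumes "finite W"
  shows "finite (shortest_paths W E s t)"
proof (cases "shortest_paths W E s t = {}")
  case False
  then obtain xs where xs: "xs \<in> shortest_paths W E s t" by auto
  have "shortest_paths W E s t \<subseteq> {ys. set ys \<subseteq> W \<and> length ys \<le> length xs}"
    using xs unfolding shortest_paths_def walks_between_def walk_def by auto
  then show ?thesis using finite_lists_length_le[OF assms] by (rule finite_subset)
qed simp

lemma sigma_pos:
  assumes "finite W" "walks_between W E s t \<noteq> {}"
  shows "sigma W E s t > 0"
  using sp_exists[OF assms(2)] sp_finite[OF assms(1)] unfolding sigma_def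
  by (simp add: card_gt_0_iff)

lemma sigma_via_src:
  assumes "finite W" "walks_between W E s t \<noteq> {}"
  shows "sigma_via W E s t s = sigma W E s t"
proof -
  have "{p \<in> shortest_paths W E s t. s \<in> set p} = shortest_paths W E s t"
    by (auto simp: shortest_paths_def walks_between_def walk_def)
  then show ?thesis by (simp add: sigma_via_def sigma_def)
qed

lemma sigma_via_same:
  assumes "s \<in> W" "v \<noteq> s"
  shows "sigma_via W E s s v = 0"
proof -
  have w: "[s] \<in> walks_between W E s s" using assms by (auto simp: walks_between_def walk_def)
  have "p = [s]" if "p \<in> shortest_paths W E s s" for p
  proof -
    from that have "\<forall>ys\<in>walks_between W E s s. length p \<le> length ys" "p \<noteq> []" "hd p = s"
      by (auto simp: shortest_paths_def walks_between_def walk_def)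
    with w have "length p \<le> 1" "p \<noteq> []" "hd p = s" by auto
    then show ?thesis by (cases p) auto
  qed
  then have "{p \<in> shortest_paths W E s s. v \<in> set p} = {}" using assms by fastforce
  then show ?thesis unfolding sigma_via_def by (simp only: card.empty)
qed

lemma sp_avoid:
  assumes sym: "\<And>x y. E x y \<Longrightarrow> E y x"
    and xs: "xs \<in> shortest_paths W E s t" and z: "z \<in> set xs" "z \<noteq> s" "z \<noteq> t"
    and nb: "\<And>w. E z w \<longleftrightarrow> w = p"
  shows False
proof -
  from xs have w: "xs \<noteq> []" "set xs \<subseteq> W" "successively E xs" "hd xs = s" "last xs = t"
    and mn: "\<And>ys. ys \<in> walks_between W E s t \<Longrightarrow> length xs \<le> length ys"
    by (auto simp: shortest_paths_def walks_between_def walk_iff)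
  from z obtain A B where AB: "xs = A @ z # B" by (meson split_list)
  have "A \<noteq> []" using AB w z by auto
  then obtain A' a where A: "A = A' @ [a]" by (cases A rule: rev_cases) auto
  have "B \<noteq> []" using AB w z by auto
  then obtain b B' where B: "B = b # B'" by (cases B) auto
  have "E a z" "E z b" using w(3) unfolding AB A B
    by (auto simp: successively_append_iff successively_Cons)
  then have ab: "a = p" "b = p" using nb sym by blast+
  let ?ys = "A' @ a # B'"
  have "?ys \<in> walks_between W E s t"
    using w unfolding AB A B ab walks_between_def walk_iff
    by (auto simp: successively_append_iff successively_Cons hd_append split: if_splits)
  from mn[OF this] show False unfolding AB A B by simp
qed

lemma sp_sub:
  assumes "W' \<subseteq> W" and ne: "walks_between W E s t \<noteq> {}"
    and sub: "\<And>xs. xs \<in> shortest_paths W E s t \<Longrightarrow> set xs \<subseteq> W'"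
  shows "shortest_paths W E s t = shortest_paths W' E s t"
proof -
  have wsub: "walks_between W' E s t \<subseteq> walks_between W E s t"
    using assms(1) by (auto simp: walks_between_def walk_def)
  from sp_exists[OF ne] obtain y0 where y0: "y0 \<in> shortest_paths W E s t" by auto
  have y0': "y0 \<in> walks_between W' E s t" using y0 sub[OF y0]
    by (auto simp: shortest_paths_def walks_between_def walk_def)
  show ?thesis
  proof
    show "shortest_paths W E s t \<subseteq> shortest_paths W' E s t"
    proof
      fix x assume x: "x \<in> shortest_paths W E s t"
      then have "x \<in> walks_between W' E s t" using sub[OF x]
        by (auto simp: shortest_paths_def walks_between_def walk_def)
      then show "x \<in> shortest_paths W' E s t" using x wsub
        by (auto simp: shortest_paths_def)
    qed
  next
    show "shortest_paths W' E s t \<subseteq> shortest_paths W E s t"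
    proof
      fix x assume x: "x \<in> shortest_paths W' E s t"
      then have "length x \<le> length y0" using y0' by (auto simp: shortest_paths_def)
      also have "\<forall>y\<in>walks_between W E s t. length y0 \<le> length y" using y0 by (auto simp: shortest_paths_def)
      ultimately show "x \<in> shortest_paths W E s t" using x wsub
        by (force simp: shortest_paths_def)
    qed
  qed
qed




lemma closed_walk:
  assumes "successively E xs" "xs \<noteq> []" "hd xs \<in> C" "\<And>a b. a \<in> C \<Longrightarrow> E a b \<Longrightarrow> b \<in> C"
  shows "set xs \<subseteq> C"
  using assms
proof (induction xs)
  case (Cons a xs)
  then show ?case by (cases xs) (auto simp: successively_Cons)
qed simp

locale G =
  fixes V :: "'a set" and E :: "'a \<Rightarrow> 'a \<Rightarrow> bool"
  assumes sg: "simple_graph V E" and conn: "connected_graph V E" and three: "card V \<ge> 3"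
begin

lemma finV: "finite V" using sg by (simp add: simple_graph_def)
lemma sym: "E x y \<Longrightarrow> E y x" using sg by (simp add: simple_graph_def)
lemma EV: "E x y \<Longrightarrow> x \<in> V \<and> y \<in> V" using sg by (simp add: simple_graph_def)
lemma irr: "\<not> E x x" using sg by (simp add: simple_graph_def)

lemma walks_ne: "s \<in> V \<Longrightarrow> t \<in> V \<Longrightarrow> walks_between V E s t \<noteq> {}"
  using conn by (simp add: connected_graph_def)

lemma leaf_nb: assumes "x \<in> V1 V E" shows "\<exists>p. \<forall>w. E x w \<longleftrightarrow> w = p"
proof -
  from assms have "card {w \<in> V. E x w} = 1" by (simp add: V1_def degree_def)
  then obtain p where "{w \<in> V. E x w} = {p}" by (rule card_1_singletonE)
  then have "\<forall>w. E x w \<longleftrightarrow> w = p" using EV by blast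
  then show ?thesis by blast
qed

definition nb where "nb x = (THE p. \<forall>w. E x w \<longleftrightarrow> w = p)"

lemma nb_prop: assumes "x \<in> V1 V E" shows "E x w \<longleftrightarrow> w = nb x"
proof -
  from leaf_nb[OF assms] obtain p where p: "\<forall>w. E x w \<longleftrightarrow> w = p" by blast
  then have "nb x = p" unfolding nb_def by (rule the_equality) (use p in blast)
  with p show ?thesis by simp
qed

lemma V1V: "V1 V E \<subseteq> V" by (auto simp: V1_def)
lemma WV: "Vge2 V E \<subseteq> V" by (auto simp: Vge2_def)

lemma nb_W: assumes x: "x \<in> V1 V E" shows "nb x \<in> Vge2 V E"
proof (rule ccontr)
  let ?p = "nb x"
  have xV: "x \<in> V" using x V1V by auto
  have "E x ?p" using nb_prop[OF x] by simp
  then have pV: "?p \<in> V" and px: "E ?p x" using EV sym by auto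
  assume "?p \<notin> Vge2 V E"
  then have pL: "?p \<in> V1 V E" using pV by (auto simp: Vge2_def)
  have np: "E ?p w \<longleftrightarrow> w = x" for w using nb_prop[OF pL, of w] nb_prop[OF pL, of x] px by simp
  have "card {x, ?p} \<le> 2" by (simp add: card_insert_le_m1)
  then have "\<not> V \<subseteq> {x, ?p}" using three card_mono[of "{x, ?p}" V] by auto
  then obtain z where z: "z \<in> V" "z \<notin> {x, ?p}" by auto
  from walks_ne[OF xV z(1)] obtain xs where "xs \<in> walks_between V E x z" by auto
  then have xs: "successively E xs" "xs \<noteq> []" "hd xs = x" "last xs = z"
    by (auto simp: walks_between_def walk_iff)
  have "set xs \<subseteq> {x, ?p}"
    by (rule closed_walk[OF xs(1,2)]) (use xs(3) nb_prop[OF x] np in auto)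
  moreover have "last xs \<in> set xs" using xs(2) by simp
  ultimately show False using xs z by auto
qed

lemma sp_VW:
  assumes "s \<in> Vge2 V E" "t \<in> Vge2 V E"
  shows "shortest_paths V E s t = shortest_paths (Vge2 V E) E s t"
proof (rule sp_sub[OF WV walks_ne])
  show "s \<in> V" "t \<in> V" using assms WV by auto
  fix xs assume xs: "xs \<in> shortest_paths V E s t"
  show "set xs \<subseteq> Vge2 V E"
  proof
    fix z assume z: "z \<in> set xs"
    have "z \<in> V" using xs z by (auto simp: shortest_paths_def walks_between_def walk_def)
    show "z \<in> Vge2 V E"
    proof (rule ccontr)
      assume "z \<notin> Vge2 V E"
      then have zL: "z \<in> V1 V E" using \<open>z \<in> V\<close> by (auto simp: Vge2_def)
      then have "z \<noteq> s" "z \<noteq> t" using assms by (auto simp: Vge2_def)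
      from sp_avoid[OF sym xs z this nb_prop[OF zL]] show False .
    qed
  qed
qed

definition pi where "pi x = (if x \<in> V1 V E then nb x else x)"

lemma pi_W: "x \<in> V \<Longrightarrow> pi x \<in> Vge2 V E"
  using nb_W by (auto simp: pi_def Vge2_def)

lemma pi_id: "x \<in> Vge2 V E \<Longrightarrow> pi x = x"
  by (auto simp: pi_def Vge2_def)

lemma reduce_left:
  assumes "x \<in> V" "y \<noteq> x" "v \<noteq> x"
  shows "sigma_via V E x y v = sigma_via V E (pi x) y v \<and> sigma V E x y = sigma V E (pi x) y"
proof (cases "x \<in> V1 V E")
  case True
  have nb: "E x w \<longleftrightarrow> w = nb x" for w using nb_prop[OF True] .
  have "sigma_via V E x y v = sigma_via V E (nb x) y v" using nb assms by (rule sigma_via_cons)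
  moreover have "sigma V E x y = sigma V E (nb x) y" using nb assms(1,2) by (rule sigma_cons)
  ultimately show ?thesis using True by (simp add: pi_def)
qed (simp add: pi_def)

lemma reduce_right:
  assumes "x \<in> V" "y \<noteq> x" "v \<noteq> x"
  shows "sigma_via V E y x v = sigma_via V E y (pi x) v \<and> sigma V E y x = sigma V E y (pi x)"
  using reduce_left[OF assms] sigma_via_sym[of E, OF sym] sigma_sym[of E, OF sym] by metis

end



locale GU = G +
  fixes u assumes uW: "u \<in> Vge2 V E"
begin

definition F where "F a b = real (sigma_via V E a b u) / real (sigma V E a b)"
definition c where "c b = card {x \<in> V - {u}. pi x = b}"

lemma uV: "u \<in> V" using uW WV by auto
lemma WL: "x \<in> Vge2 V E \<Longrightarrow> x \<notin> V1 V E" by (auto simp: Vge2_def)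

lemma F_pi:
  assumes "s \<in> V" "t \<in> V" "s \<noteq> t" "s \<noteq> u" "t \<noteq> u"
  shows "F s t = F (pi s) (pi t)"
proof -
  have 1: "F s t = F (pi s) t" using reduce_left[OF assms(1) assms(3)[symmetric] assms(4)[symmetric]]
    by (simp add: F_def)
  show ?thesis
  proof (cases "pi s = t")
    case True
    then have "t \<in> Vge2 V E" using pi_W assms by auto
    then show ?thesis using 1 True pi_id by simp
  next
    case False
    then show ?thesis using 1 reduce_right[OF assms(2) False assms(5)[symmetric]] by (simp add: F_def)
  qed
qed

lemma F_same: "a \<in> Vge2 V E \<Longrightarrow> F a a = (if a = u then 1 else 0)"
proof -
  assume a: "a \<in> Vge2 V E"
  then have aV: "a \<in> V" using WV by auto
  show ?thesis
  proof (cases "a = u")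
    case True
    have "sigma V E u u > 0" using sigma_pos[OF finV walks_ne[OF uV uV]] .
    then show ?thesis using True sigma_via_src[OF finV walks_ne[OF uV uV]] by (simp add: F_def)
  next
    case False
    then show ?thesis using sigma_via_same[OF aV, of u E] by (simp add: F_def)
  qed
qed

lemma F_u1: "b \<in> V \<Longrightarrow> F u b = 1"
  using sigma_pos[OF finV walks_ne[OF uV]] sigma_via_src[OF finV walks_ne[OF uV]]
  by (simp add: F_def)

lemma F_u2: "b \<in> V \<Longrightarrow> F b u = 1"
  using F_u1[of b] sigma_via_sym[of E, OF sym] sigma_sym[of E, OF sym] by (simp add: F_def)

lemma fib_card: assumes b: "b \<in> Vge2 V E" shows "card {x \<in> V. pi x = b} = 1 + deg1 V E b"
proof -
  have "{x \<in> V. pi x = b} = insert b {w \<in> V. E b w \<and> degree V E w = 1}"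
  proof safe
    fix x assume x: "x \<in> V" "b = pi x" "x \<noteq> pi x"
    then have xL: "x \<in> V1 V E" by (auto simp: pi_def split: if_splits)
    then have "E x b" using x nb_prop[OF xL] by (simp add: pi_def)
    then show "E (pi x) x" using x sym by auto
    show "degree V E x = 1" using xL by (simp add: V1_def)
  next
    show "b \<in> V" using b WV by auto
    show "pi b = b" using pi_id[OF b] .
  next
    fix w assume w: "w \<in> V" "E b w" "degree V E w = 1"
    then have wL: "w \<in> V1 V E" by (simp add: V1_def)
    then show "pi w = b" using nb_prop[OF wL, of b] sym[OF w(2)] by (simp add: pi_def)
  qed
  moreover have "b \<notin> {w \<in> V. E b w \<and> degree V E w = 1}" using irr by auto
  moreover have "finite {w \<in> V. E b w \<and> degree V E w = 1}" using finV by auto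
  ultimately show ?thesis by (simp add: deg1_def)
qed

lemma c_ne: assumes "b \<in> Vge2 V E" "b \<noteq> u" shows "c b = 1 + deg1 V E b"
proof -
  have "{x \<in> V - {u}. pi x = b} = {x \<in> V. pi x = b}" using assms pi_id[OF uW] by auto
  then show ?thesis using fib_card[OF assms(1)] by (simp add: c_def)
qed

lemma c_u: "c u = deg1 V E u"
proof -
  have "{x \<in> V. pi x = u} = insert u {x \<in> V - {u}. pi x = u}" using uV pi_id[OF uW] by auto
  then have "card {x \<in> V. pi x = u} = Suc (c u)" using finV by (simp add: c_def)
  then show ?thesis using fib_card[OF uW] by simp
qed

lemma group_sum:
  "(\<Sum>x\<in>V - {u}. (H (pi x) :: real)) = (\<Sum>b\<in>Vge2 V E. real (c b) * H b)"
proof -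
  have fS: "finite (V - {u})" using finV by simp
  have fT: "finite (Vge2 V E)" using finV WV finite_subset by blast
  have sub: "pi ` (V - {u}) \<subseteq> Vge2 V E" using pi_W by auto
  have eq2: "sum (\<lambda>x. H (pi x)) {x. x \<in> V - {u} \<and> pi x = b} = real (c b) * H b" for b
  proof -
    have "sum (\<lambda>x. H (pi x)) {x. x \<in> V - {u} \<and> pi x = b} = sum (\<lambda>x. H b) {x. x \<in> V - {u} \<and> pi x = b}"
      by (rule sum.cong) auto
    then show ?thesis by (simp add: c_def)
  qed
  have "(\<Sum>b\<in>Vge2 V E. real (c b) * H b) = (\<Sum>x\<in>V - {u}. H (pi x))"
    using sum.group[OF fS fT sub, of "\<lambda>x. H (pi x)"] by (simp only: eq2)
  then show ?thesis by simp
qed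

end



context GU begin

lemma csum: "(\<Sum>b\<in>Vge2 V E. real (c b)) = real (card V) - 1"
proof -
  have "(\<Sum>x\<in>V - {u}. (\<lambda>_. 1::real) (pi x)) = (\<Sum>b\<in>Vge2 V E. real (c b) * 1)"
    by (rule group_sum)
  moreover have "card V \<ge> 1" using three by simp
  ultimately show ?thesis using uV finV by (simp add: card_Diff_singleton of_nat_diff)
qed

lemma finW: "finite (Vge2 V E)" using finV WV finite_subset by blast

lemma S0:
  "(\<Sum>(s,t) \<in> {(s,t). s \<in> V \<and> t \<in> V \<and> s \<noteq> t \<and> s \<noteq> u \<and> t \<noteq> u}.
        real (sigma_via V E s t u) / real (sigma V E s t))
   = (\<Sum>a\<in>Vge2 V E. real (c a) * ((\<Sum>b\<in>Vge2 V E. real (c b) * F a b) - (if a = u then 1 else 0)))"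
proof -
  have P: "{(s,t). s \<in> V \<and> t \<in> V \<and> s \<noteq> t \<and> s \<noteq> u \<and> t \<noteq> u} = Sigma (V - {u}) (\<lambda>s. V - {u} - {s})"
    by auto
  have "(\<Sum>(s,t) \<in> {(s,t). s \<in> V \<and> t \<in> V \<and> s \<noteq> t \<and> s \<noteq> u \<and> t \<noteq> u}.
        real (sigma_via V E s t u) / real (sigma V E s t))
      = (\<Sum>s\<in>V - {u}. \<Sum>t\<in>V - {u} - {s}. F s t)"
    unfolding P F_def by (rule sum.Sigma[symmetric]) (use finV in auto)
  also have "\<dots> = (\<Sum>s\<in>V - {u}. \<Sum>t\<in>V - {u} - {s}. F (pi s) (pi t))"
    by (intro sum.cong refl F_pi) auto
  also have "\<dots> = (\<Sum>s\<in>V - {u}. (\<Sum>t\<in>V - {u}. F (pi s) (pi t)) - F (pi s) (pi s))"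
    by (intro sum.cong refl, subst sum_diff1) (use finV in auto)
  also have "\<dots> = (\<Sum>s\<in>V - {u}. (\<Sum>b\<in>Vge2 V E. real (c b) * F (pi s) b) - (if pi s = u then 1 else 0))"
    by (intro sum.cong refl, subst group_sum) (use F_same pi_W in auto)
  also have "\<dots> = (\<Sum>a\<in>Vge2 V E. real (c a) * ((\<Sum>b\<in>Vge2 V E. real (c b) * F a b) - (if a = u then 1 else 0)))"
    by (rule group_sum[where H="\<lambda>a. (\<Sum>b\<in>Vge2 V E. real (c b) * F a b) - (if a = u then 1 else 0)"])
  finally show ?thesis .
qed

lemma S1:
  assumes a: "a \<in> Vge2 V E" "a \<noteq> u"
  shows "(\<Sum>b\<in>Vge2 V E. real (c b) * F a b) = real (deg1 V E u) + (\<Sum>b\<in>Vge2 V E - {a, u}. real (c b) * F a b)"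
proof -
  have aV: "a \<in> V" using a WV by auto
  have "(\<Sum>b\<in>Vge2 V E. real (c b) * F a b) = real (c u) * F a u + (\<Sum>b\<in>Vge2 V E - {u}. real (c b) * F a b)"
    by (rule sum.remove[OF finW uW])
  also have "(\<Sum>b\<in>Vge2 V E - {u}. real (c b) * F a b) = real (c a) * F a a + (\<Sum>b\<in>Vge2 V E - {u} - {a}. real (c b) * F a b)"
    by (rule sum.remove) (use finW a in auto)
  also have "Vge2 V E - {u} - {a} = Vge2 V E - {a, u}" by auto
  finally show ?thesis using F_same[OF a(1)] a F_u2[OF aV] c_u by simp
qed

lemma S2:
  "(\<Sum>a\<in>Vge2 V E. real (c a) * ((\<Sum>b\<in>Vge2 V E. real (c b) * F a b) - (if a = u then 1 else 0)))
   = (\<Sum>a\<in>Vge2 V E - {u}. real (c a) * (\<Sum>b\<in>Vge2 V E - {a, u}. real (c b) * F a b))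
     + real (deg1 V E u) * (2 * real (card V) - 3 - real (deg1 V E u))"
proof -
  let ?d = "real (deg1 V E u)"
  let ?R = "\<lambda>a. (\<Sum>b\<in>Vge2 V E - {a, u}. real (c b) * F a b)"
  have Fu: "(\<Sum>b\<in>Vge2 V E. real (c b) * F u b) = real (card V) - 1"
    using csum F_u1 WV by (simp add: subset_iff)
  have "(\<Sum>a\<in>Vge2 V E. real (c a) * ((\<Sum>b\<in>Vge2 V E. real (c b) * F a b) - (if a = u then 1 else 0)))
     = ?d * (real (card V) - 2) + (\<Sum>a\<in>Vge2 V E - {u}. real (c a) * ((\<Sum>b\<in>Vge2 V E. real (c b) * F a b) - (if a = u then 1 else 0)))"
    by (subst sum.remove[OF finW uW]) (simp add: Fu c_u)
  also have "(\<Sum>a\<in>Vge2 V E - {u}. real (c a) * ((\<Sum>b\<in>Vge2 V E. real (c b) * F a b) - (if a = u then 1 else 0)))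
     = (\<Sum>a\<in>Vge2 V E - {u}. ?d * real (c a) + real (c a) * ?R a)"
  proof (rule sum.cong)
    fix a assume a: "a \<in> Vge2 V E - {u}"
    then have "(\<Sum>b\<in>Vge2 V E. real (c b) * F a b) = ?d + ?R a" using S1 by auto
    then show "real (c a) * ((\<Sum>b\<in>Vge2 V E. real (c b) * F a b) - (if a = u then 1 else 0))
      = ?d * real (c a) + real (c a) * ?R a" using a by (simp add: algebra_simps)
  qed simp
  also have "\<dots> = ?d * (\<Sum>a\<in>Vge2 V E - {u}. real (c a)) + (\<Sum>a\<in>Vge2 V E - {u}. real (c a) * ?R a)"
    by (simp add: sum.distrib sum_distrib_left)
  also have "(\<Sum>a\<in>Vge2 V E - {u}. real (c a)) = real (card V) - 1 - ?d"
    using csum sum.remove[OF finW uW, of "\<lambda>a. real (c a)"] c_u by simp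
  finally show ?thesis by (simp add: algebra_simps)
qed

lemma S3:
  assumes s: "s \<in> Vge2 V E" "s \<noteq> u"
  shows "(1 + real (deg1 V E s)) * (delta_tilde V E s u + zeta V E s u)
    = real (c s) * (\<Sum>b\<in>Vge2 V E - {s, u}. real (c b) * F s b)"
proof -
  have g: "real (sigma_via (Vge2 V E) E s t u) / real (sigma (Vge2 V E) E s t) = F s t"
    if "t \<in> Vge2 V E" for t
    using sp_VW[OF s(1) that] by (simp add: F_def sigma_def sigma_via_def)
  have "delta_tilde V E s u + zeta V E s u = (\<Sum>t\<in>Vge2 V E - {s, u}. real (c t) * F s t)"
    unfolding delta_tilde_def zeta_def sum.distrib[symmetric]
  proof (rule sum.cong)
    fix t assume t: "t \<in> Vge2 V E - {s, u}"
    let ?q = "real (sigma_via (Vge2 V E) E s t u) / real (sigma (Vge2 V E) E s t)"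
    have "real (deg1 V E t) * real (sigma_via (Vge2 V E) E s t u) / real (sigma (Vge2 V E) E s t)
      = real (deg1 V E t) * F s t" using t g[of t] by (metis times_divide_eq_right DiffD1)
    then show "?q + real (deg1 V E t) * real (sigma_via (Vge2 V E) E s t u) / real (sigma (Vge2 V E) E s t)
      = real (c t) * F s t" using t g[of t] c_ne[of t] by (simp add: algebra_simps)
  qed simp
  then show ?thesis using c_ne[OF s] by simp
qed

lemma main:
  "real (card V - 1) * real (card V - 2) * betweenness V E u =
    (\<Sum>s \<in> Vge2 V E - {u}. (1 + real (deg1 V E s)) * (delta_tilde V E s u + zeta V E s u))
    + real (deg1 V E u) * (2 * real (card V) - 3 - real (deg1 V E u))"
proof -
  have nz: "real (card V - 1) * real (card V - 2) \<noteq> 0" using three by simp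
  have "real (card V - 1) * real (card V - 2) * betweenness V E u =
     (\<Sum>(s,t) \<in> {(s,t). s \<in> V \<and> t \<in> V \<and> s \<noteq> t \<and> s \<noteq> u \<and> t \<noteq> u}.
        real (sigma_via V E s t u) / real (sigma V E s t))"
    unfolding betweenness_def using nz by simp
  also have "\<dots> = (\<Sum>a\<in>Vge2 V E - {u}. real (c a) * (\<Sum>b\<in>Vge2 V E - {a, u}. real (c b) * F a b))
     + real (deg1 V E u) * (2 * real (card V) - 3 - real (deg1 V E u))"
    using S0 S2 by simp
  also have "(\<Sum>a\<in>Vge2 V E - {u}. real (c a) * (\<Sum>b\<in>Vge2 V E - {a, u}. real (c b) * F a b))
     = (\<Sum>s \<in> Vge2 V E - {u}. (1 + real (deg1 V E s)) * (delta_tilde V E s u + zeta V E s u))"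
    by (rule sum.cong) (auto simp: S3)
  finally show ?thesis .
qed

end

theorem mainTheorem6:
  fixes V :: "'a set" and E :: "'a \<Rightarrow> 'a \<Rightarrow> bool" and u :: 'a
  assumes "simple_graph V E"
    and "connected_graph V E"
    and "card V \<ge> 3"
    and "u \<in> Vge2 V E"
  shows "real (card V - 1) * real (card V - 2) * betweenness V E u =
    (\<Sum>s \<in> Vge2 V E - {u}. (1 + real (deg1 V E s)) * (delta_tilde V E s u + zeta V E s u))
    + real (deg1 V E u) * (2 * real (card V) - 3 - real (deg1 V E u))"
proof -
  interpret GU V E u using assms by unfold_locales
  show ?thesis by (rule main)
qed


end
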